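(* Let $\underline{\theta} < 0 < \overline{\theta}$ and $\underline{\delta B} < 0 < \overline{\delta B}$ be real numbers. Work in $\mathbb{R}^5$ with coordinates $(\psi, z^{+}, z^{-}, \theta, \delta p)$ and define the three polytopes $$\mathcal{P}_{0,0,0} = \{(\psi,z^+,z^-)=(0,0,0),\ \delta p = 0,\ \underline{\theta} \le \theta \le \overline{\theta}\},$$ $$\mathcal{P}_{1,1,0} = \{(\psi,z^+,z^-)=(1,1,0),\ \underline{\delta B}\,\theta \le \delta p \le \overline{\delta B}\,\theta,\ 0 \le \theta \le \overline{\theta}\},$$ $$\mathcal{P}_{1,0,1} = \{(\psi,z^+,z^-)=(1,0,1),\ \overline{\delta B}\,\theta \le \delta p \le \underline{\delta B}\,\theta,\ \underline{\theta} \le \theta \le 0\},$$ and let $\mathcal{P} = \operatorname{conv}(\mathcal{P}_{0,0,0} \cup \mathcal{P}_{1,1,0} \cup \mathcal{P}_{1,0,1})$. Then each of the following inequalities is facet-defining for $\mathcal{P}$ (i.e. valid for $\mathcal{P}$, and the face of $\mathcal{P}$ on which it holds with equality has dimension $\dim \mathcal{P} - 1$): 1. $\underline{\theta} z^{+} + \theta \ge \underline{\theta}$; 2. $\overline{\theta} z^{-} + \theta \le \overline{\theta}$; 3. $-\overline{\theta}\,\underline{\delta B}\, z^{+} - \underline{\theta}\,\overline{\delta B}\, z^{-} + \delta p \ge 0$; 4. $-\overline{\theta}\,\overline{\delta B}\, z^{+} - \underline{\theta}\,\underline{\delta B}\, z^{-} + \delta p \le 0$; 5. $\overline{\theta}\,\underline{\delta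 B}\, z^{+} + \overline{\theta}\,\overline{\delta B}\, z^{-} + \overline{\delta B}\,\theta - \delta p \le \overline{\theta}\,\overline{\delta B}$; 6. $\overline{\theta}\,\overline{\delta B}\, z^{+} + \overline{\theta}\,\underline{\delta B}\, z^{-} + \underline{\delta B}\,\theta - \delta p \ge \overline{\theta}\,\underline{\delta B}$; 7. $\underline{\theta}\,\overline{\delta B}\, z^{+} + \underline{\theta}\,\underline{\delta B}\, z^{-} + \overline{\delta B}\,\theta - \delta p \ge \underline{\theta}\,\overline{\delta B}$; 8. $\underline{\theta}\,\underline{\delta B}\, z^{+} + \underline{\theta}\,\overline{\delta B}\, z^{-} + \underline{\delta B}\,\theta - \delta p \le \underline{\theta}\,\underline{\delta B}$.
   Context: This models a single transmission branch with a FACTS device: $\psi$ indicates installation of the device, $z^+$ (resp. $z^-$) indicates that the device is installed and the phase angle difference $\theta$ is nonnegative (resp. nonpositive), $\delta p$ is the change in power flow induced by the device, $[\underline{\theta},\overline{\theta}]$ are the bounds on the angle difference and $[\underline{\delta B},\overline{\delta B}]$ the bounds on the susceptance change. The polytope $\mathcal{P}$ satisfies the equation $\psi = z^+ + z^-$. *)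

theory Defs
  imports "HOL-Analysis.Analysis"
begin

text \<open>Points of R^5 are tuples (psi, zp, zm, theta, dp) of type real*real*real*real*real
  (a euclidean_space). thl, thu: angle bounds; bl, bu: susceptance-change bounds.\<close>

type_synonym pt = "real \<times> real \<times> real \<times> real \<times> real"

definition P000 :: "real \<Rightarrow> real \<Rightarrow> real \<Rightarrow> real \<Rightarrow> pt set" where
  "P000 thl thu bl bu = {(psi, zp, zm, th, dp). psi = 0 \<and> zp = 0 \<and> zm = 0 \<and> dp = 0
      \<and> thl \<le> th \<and> th \<le> thu}"

definition P110 :: "real \<Rightarrow> real \<Rightarrow> real \<Rightarrow> real \<Rightarrow> pt set" where
  "P110 thl thu bl bu = {(psi, zp, zm, th, dp). psi = 1 \<and> zp = 1 \<and> zm = 0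
      \<and> bl * th \<le> dp \<and> dp \<le> bu * th \<and> 0 \<le> th \<and> th \<le> thu}"

definition P101 :: "real \<Rightarrow> real \<Rightarrow> real \<Rightarrow> real \<Rightarrow> pt set" where
  "P101 thl thu bl bu = {(psi, zp, zm, th, dp). psi = 1 \<and> zp = 0 \<and> zm = 1
      \<and> bu * th \<le> dp \<and> dp \<le> bl * th \<and> thl \<le> th \<and> th \<le> 0}"

definition Pconv :: "real \<Rightarrow> real \<Rightarrow> real \<Rightarrow> real \<Rightarrow> pt set" where
  "Pconv thl thu bl bu = convex hull (P000 thl thu bl bu \<union> P110 thl thu bl bu \<union> P101 thl thu bl bu)"

definition facet_le :: "'a::euclidean_space set \<Rightarrow> ('a \<Rightarrow> real) \<Rightarrow> real \<Rightarrow> bool" where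
  "facet_le P f b \<longleftrightarrow> (\<forall>x\<in>P. f x \<le> b) \<and> aff_dim (P \<inter> {x. f x = b}) = aff_dim P - 1"

definition facet_ge :: "'a::euclidean_space set \<Rightarrow> ('a \<Rightarrow> real) \<Rightarrow> real \<Rightarrow> bool" where
  "facet_ge P f b \<longleftrightarrow> (\<forall>x\<in>P. f x \<ge> b) \<and> aff_dim (P \<inter> {x. f x = b}) = aff_dim P - 1"

end

theory Submission
  imports Defs
begin



lemma aff_dim_4pts:
  fixes a b c d :: "'n::euclidean_space"
  assumes "distinct [a,b,c,d]"
  and "\<And>ua ub uc ud. ua+ub+uc+ud = 0 \<Longrightarrow> ua *\<^sub>R a + ub *\<^sub>R b + uc *\<^sub>R c + ud *\<^sub>R d = 0
        \<Longrightarrow> ua = 0 \<and> ub = 0 \<and> uc = 0 \<and> ud = 0"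
  shows "aff_dim {a,b,c,d} = 3"
proof -
  have "\<not> affine_dependent {a,b,c,d}"
  proof
    assume "affine_dependent {a,b,c,d}"
    then obtain U where U: "sum U {a,b,c,d} = 0" "\<exists>v\<in>{a,b,c,d}. U v \<noteq> 0"
      "(\<Sum>v\<in>{a,b,c,d}. U v *\<^sub>R v) = 0"
      using affine_dependent_explicit_finite[of "{a,b,c,d}"] by auto
    have "U a + U b + U c + U d = 0" "U a *\<^sub>R a + U b *\<^sub>R b + U c *\<^sub>R c + U d *\<^sub>R d = 0"
      using U assms(1) by (simp_all add: add.assoc)
    from assms(2)[OF this] U(2) show False by auto
  qed
  from aff_dim_affine_independent[OF this] assms(1) show ?thesis by simp
qed

lemma aff_dim_5pts:
  fixes a b c d e :: "'n::euclidean_space"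
  assumes "distinct [a,b,c,d,e]"
  and "\<And>ua ub uc ud ue. ua+ub+uc+ud+ue = 0 \<Longrightarrow> ua *\<^sub>R a + ub *\<^sub>R b + uc *\<^sub>R c + ud *\<^sub>R d + ue *\<^sub>R e = 0
        \<Longrightarrow> ua = 0 \<and> ub = 0 \<and> uc = 0 \<and> ud = 0 \<and> ue = 0"
  shows "aff_dim {a,b,c,d,e} = 4"
proof -
  have "\<not> affine_dependent {a,b,c,d,e}"
  proof
    assume "affine_dependent {a,b,c,d,e}"
    then obtain U where U: "sum U {a,b,c,d,e} = 0" "\<exists>v\<in>{a,b,c,d,e}. U v \<noteq> 0"
      "(\<Sum>v\<in>{a,b,c,d,e}. U v *\<^sub>R v) = 0"
      using affine_dependent_explicit_finite[of "{a,b,c,d,e}"] by auto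
    have "U a + U b + U c + U d + U e = 0" "U a *\<^sub>R a + U b *\<^sub>R b + U c *\<^sub>R c + U d *\<^sub>R d + U e *\<^sub>R e = 0"
      using U assms(1) by (simp_all add: add.assoc)
    from assms(2)[OF this] U(2) show False by auto
  qed
  from aff_dim_affine_independent[OF this] assms(1) show ?thesis by simp
qed

lemma facet_aux:
  fixes U T :: "'n::euclidean_space set"
  assumes "\<forall>x\<in>U. c \<bullet> x \<le> b" "y \<in> U" "c \<bullet> y < b" "T \<subseteq> U" "z \<in> T" "\<forall>x\<in>T. c \<bullet> x = b"
    "aff_dim T = aff_dim U - 1"
  shows "facet_le (convex hull U) (\<lambda>x. c \<bullet> x) b"
proof -
  let ?P = "convex hull U"
  have UP: "U \<subseteq> ?P" by (rule hull_subset)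
  have PA: "?P \<subseteq> affine hull ?P" by (rule hull_subset)
  have v: "?P \<subseteq> {x. c \<bullet> x \<le> b}"
    using assms(1) by (intro hull_minimal) (auto simp: convex_halfspace_le)
  have "T \<subseteq> ?P \<inter> {x. c \<bullet> x = b}" using assms(4,6) UP by blast
  hence ge: "aff_dim T \<le> aff_dim (?P \<inter> {x. c \<bullet> x = b})" by (rule aff_dim_subset)
  have "?P \<inter> {x. c \<bullet> x = b} \<subseteq> affine hull ?P \<inter> {x. c \<bullet> x = b}"
    using PA by blast
  hence le: "aff_dim (?P \<inter> {x. c \<bullet> x = b}) \<le> aff_dim (affine hull ?P \<inter> {x. c \<bullet> x = b})"
    by (rule aff_dim_subset)
  have yP: "y \<in> affine hull ?P" using assms(2) UP PA by blast
  have zP: "z \<in> affine hull ?P" using assms(4,5) UP PA by blast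
  have ne: "affine hull ?P \<inter> {v. c \<bullet> v = b} \<noteq> {}" using zP assms(5,6) by blast
  have ns: "\<not> affine hull ?P \<subseteq> {v. c \<bullet> v = b}" using yP assms(3) by force
  have "aff_dim (affine hull ?P \<inter> {x. c \<bullet> x = b}) = aff_dim (affine hull ?P) - 1"
    using aff_dim_affine_Int_hyperplane[OF affine_affine_hull, of ?P c b] ne ns
    by (simp only: if_False)
  then have "aff_dim (?P \<inter> {x. c \<bullet> x = b}) = aff_dim ?P - 1"
    using ge le assms(7) unfolding aff_dim_affine_hull aff_dim_convex_hull by linarith
  then show ?thesis unfolding facet_le_def using v by blast
qed

lemma facet_aux_ge:
  fixes U T :: "'n::euclidean_space set"
  assumes "\<forall>x\<in>U. c \<bullet> x \<ge> b" "y \<in> U" "c \<bullet> y > b" "T \<subseteq> U" "z \<in> T" "\<forall>x\<in>T. c \<bullet> x = b"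
    "aff_dim T = aff_dim U - 1"
  shows "facet_ge (convex hull U) (\<lambda>x. c \<bullet> x) b"
proof -
  have "facet_le (convex hull U) (\<lambda>x. (-c) \<bullet> x) (-b)"
  proof (rule facet_aux[where U=U and y=y and T=T and z=z])
    show "\<forall>x\<in>U. - c \<bullet> x \<le> - b" using assms(1) by simp
    show "- c \<bullet> y < - b" using assms(3) by simp
    show "\<forall>x\<in>T. - c \<bullet> x = - b" using assms(6) by simp
  qed (use assms in simp_all)
  moreover have "{x. (-c) \<bullet> x = -b} = {x. c \<bullet> x = b}" by auto
  ultimately show ?thesis unfolding facet_le_def facet_ge_def by auto
qed

lemma valid_pts:
  fixes thl thu bl bu :: real
  assumes "thl < 0" "0 < thu" "bl < 0" "0 < bu"
  assumes "(psi, zp, zm, th, dp) \<in> P000 thl thu bl bu \<union> P110 thl thu bl bu \<union> P101 thl thu bl bu"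
  shows "thl * zp + th \<ge> thl
    \<and> thu * zm + th \<le> thu
    \<and> - thu * bl * zp - thl * bu * zm + dp \<ge> 0
    \<and> - thu * bu * zp - thl * bl * zm + dp \<le> 0
    \<and> thu * bl * zp + thu * bu * zm + bu * th - dp \<le> thu * bu
    \<and> thu * bu * zp + thu * bl * zm + bl * th - dp \<ge> thu * bl
    \<and> thl * bu * zp + thl * bl * zm + bu * th - dp \<ge> thl * bu
    \<and> thl * bl * zp + thl * bu * zm + bl * th - dp \<le> thl * bl"
proof -
  have c: "thu * bl < 0" "thu * bu > 0" "thl * bu < 0" "thl * bl > 0"
    using assms(1-4) by (simp_all add: mult_pos_neg mult_neg_neg mult_neg_pos)
  consider (a) "psi = 0" "zp = 0" "zm = 0" "dp = 0" "thl \<le> th" "th \<le> thu"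
    | (b) "psi = 1" "zp = 1" "zm = 0" "bl * th \<le> dp" "dp \<le> bu * th" "0 \<le> th" "th \<le> thu"
    | (c) "psi = 1" "zp = 0" "zm = 1" "bu * th \<le> dp" "dp \<le> bl * th" "thl \<le> th" "th \<le> 0"
    using assms(5) unfolding P000_def P110_def P101_def by auto
  then show ?thesis
  proof cases
    case a
    have "bu * thl \<le> bu * th" "bu * th \<le> bu * thu" "bl * thu \<le> bl * th" "bl * th \<le> bl * thl"
      using a assms by (simp_all add: mult_left_mono mult_left_mono_neg)
    then show ?thesis using a c by (simp add: mult.commute)
  next
    case b
    have "thu * bl \<le> bl * th" "bu * th \<le> thu * bu" "bl * th \<le> 0" "0 \<le> bu * th"
      using b assms by (simp_all add: mult_left_mono mult_left_mono_neg mult_nonpos_nonneg mult.commute)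
    moreover have "(bu - bl) * (thu - th) \<ge> 0" using b assms by simp
    hence "thu * bu - bu * th - thu * bl + bl * th \<ge> 0" by (simp add: algebra_simps)
    moreover have "thl * bl - thl * bu > 0" "thu * bu - thu * bl > 0"
      using assms by (simp_all add: right_diff_distrib[symmetric] left_diff_distrib[symmetric] mult_neg_neg)
    ultimately show ?thesis using b c by simp
  next
    case c
    have "thl * bu \<le> bu * th" "bl * th \<le> thl * bl" "bu * th \<le> 0" "0 \<le> bl * th"
      using c assms by (simp_all add: mult_left_mono mult_left_mono_neg mult_nonneg_nonpos mult_nonpos_nonpos mult.commute)
    moreover have "(bu - bl) * (th - thl) \<ge> 0" using c assms by simp
    hence "bu * th - thl * bu - bl * th + thl * bl \<ge> 0" by (simp add: algebra_simps)
    moreover have "thl * bl - thl * bu > 0" "thu * bu - thu * bl > 0"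
      using assms by (simp_all add: right_diff_distrib[symmetric] left_diff_distrib[symmetric] mult_neg_neg)
    ultimately show ?thesis using c by simp
  qed
qed

lemma s3a:
  fixes a b u v :: real
  assumes "a * u + b * v = 0" "u + v = 0" "a \<noteq> b"
  shows "u = 0"
proof -
  have v: "v = - u" using assms(2) by (simp add: add_eq_0_iff)
  have "(a - b) * u = 0" using assms(1) unfolding v by (simp add: algebra_simps)
  thus ?thesis using assms(3) by simp
qed

lemma s3b:
  fixes a b u v :: real
  assumes "a * u + b * v = 0" "u + v = 0" "a \<noteq> b"
  shows "v = 0"
  using s3a[OF assms] assms(2) by simp

lemma s2a:
  fixes x p q u v :: real
  assumes "p * (x * u) + q * (x * v) = 0" "x * u + x * v = 0 \<or> u + v = 0 \<or> v + u = 0 \<or> x * v + x * u = 0"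
    "x \<noteq> 0" "p \<noteq> q"
  shows "u = 0"
proof -
  have "u + v = 0" using assms(2)
  proof (elim disjE)
    assume "x * u + x * v = 0"
    hence "x * (u + v) = 0" by (simp add: distrib_left)
    thus ?thesis using assms(3) by simp
  next
    assume "x * v + x * u = 0"
    hence "x * (u + v) = 0" by (simp add: distrib_left add.commute)
    thus ?thesis using assms(3) by simp
  qed (simp_all add: add.commute)
  hence v: "v = - u" by (simp add: add_eq_0_iff)
  have "(x * (p - q)) * u = 0" using assms(1) unfolding v by (simp add: algebra_simps)
  thus ?thesis using assms(3,4) by simp
qed

lemma s2b:
  fixes x p q u v :: real
  assumes "p * (x * u) + q * (x * v) = 0" "x * u + x * v = 0 \<or> u + v = 0 \<or> v + u = 0 \<or> x * v + x * u = 0"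
    "x \<noteq> 0" "p \<noteq> q"
  shows "v = 0"
proof -
  have "u = 0" by (rule s2a[OF assms])
  thus ?thesis using assms(2,3) by auto
qed

theorem theorem1:
  fixes thl thu bl bu :: real
  assumes "thl < 0" "0 < thu" "bl < 0" "0 < bu"
  defines "P \<equiv> Pconv thl thu bl bu"
  shows "facet_ge P (\<lambda>(psi, zp, zm, th, dp). thl * zp + th) thl
    \<and> facet_le P (\<lambda>(psi, zp, zm, th, dp). thu * zm + th) thu
    \<and> facet_ge P (\<lambda>(psi, zp, zm, th, dp). - thu * bl * zp - thl * bu * zm + dp) 0
    \<and> facet_le P (\<lambda>(psi, zp, zm, th, dp). - thu * bu * zp - thl * bl * zm + dp) 0
    \<and> facet_le P (\<lambda>(psi, zp, zm, th, dp). thu * bl * zp + thu * bu * zm + bu * th - dp) (thu * bu)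
    \<and> facet_ge P (\<lambda>(psi, zp, zm, th, dp). thu * bu * zp + thu * bl * zm + bl * th - dp) (thu * bl)
    \<and> facet_ge P (\<lambda>(psi, zp, zm, th, dp). thl * bu * zp + thl * bl * zm + bu * th - dp) (thl * bu)
    \<and> facet_le P (\<lambda>(psi, zp, zm, th, dp). thl * bl * zp + thl * bu * zm + bl * th - dp) (thl * bl)"
proof -
  define U where "U = P000 thl thu bl bu \<union> P110 thl thu bl bu \<union> P101 thl thu bl bu"
  have PU: "P = convex hull U" unfolding P_def U_def Pconv_def by simp
  have V: "\<And>psi zp zm th dp. (psi, zp, zm, th, dp) \<in> U \<Longrightarrow> (thl * zp + th \<ge> thl
    \<and> thu * zm + th \<le> thu
    \<and> - thu * bl * zp - thl * bu * zm + dp \<ge> 0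
    \<and> - thu * bu * zp - thl * bl * zm + dp \<le> 0
    \<and> thu * bl * zp + thu * bu * zm + bu * th - dp \<le> thu * bu
    \<and> thu * bu * zp + thu * bl * zm + bl * th - dp \<ge> thu * bl
    \<and> thl * bu * zp + thl * bl * zm + bu * th - dp \<ge> thl * bu
    \<and> thl * bl * zp + thl * bu * zm + bl * th - dp \<le> thl * bl)"
    using valid_pts[OF assms(1-4)] unfolding U_def by blast
  define A :: pt where "A = (0,0,0,thl,0)"
  define B :: pt where "B = (0,0,0,thu,0)"
  define C :: pt where "C = (1,1,0,0,0)"
  define D :: pt where "D = (1,1,0,thu,bl*thu)"
  define E :: pt where "E = (1,1,0,thu,bu*thu)"
  define F :: pt where "F = (1,0,1,0,0)"
  define G :: pt where "G = (1,0,1,thl,bu*thl)"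
  define H :: pt where "H = (1,0,1,thl,bl*thl)"
  have m1: "bl * thu \<le> bu * thu" "bu * thl \<le> bl * thl"
    using assms by (simp_all add: mult_right_mono mult_right_mono_neg)
  have inU: "A \<in> U" "B \<in> U" "C \<in> U" "D \<in> U" "E \<in> U" "F \<in> U" "G \<in> U" "H \<in> U"
    unfolding U_def A_def B_def C_def D_def E_def F_def G_def H_def P000_def P110_def P101_def
    using assms m1 by auto
  have ne: "thu * (bl - bu) \<noteq> 0" "thl * (bl - bu) \<noteq> 0" "thu \<noteq> 0" "thl \<noteq> 0" "bl \<noteq> bu" "bu \<noteq> bl" "thl \<noteq> thu" "thu \<noteq> thl" using assms by auto
  have dimU: "aff_dim U = 4"
  proof (rule antisym)
    have "U \<subseteq> {x. (1::real,-1::real,-1::real,0::real,0::real) \<bullet> x = 0}"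
      unfolding U_def P000_def P110_def P101_def by auto
    hence "aff_dim U \<le> aff_dim {x. (1::real,-1::real,-1::real,0::real,0::real) \<bullet> x = 0}"
      by (rule aff_dim_subset)
    also have "\<dots> = 4" by (subst aff_dim_hyperplane) (simp_all add: zero_prod_def)
    finally show "aff_dim U \<le> 4" .
    have "aff_dim {A,C,D,E,F} = 4"
    proof (rule aff_dim_5pts)
      show "distinct [A,C,D,E,F]" unfolding A_def C_def D_def E_def F_def using assms ne by auto
      show "ua = 0 \<and> ub = 0 \<and> uc = 0 \<and> ud = 0 \<and> ue = 0"
        if "ua + ub + uc + ud + ue = 0" "ua *\<^sub>R A + ub *\<^sub>R C + uc *\<^sub>R D + ud *\<^sub>R E + ue *\<^sub>R F = 0"
        for ua ub uc ud ue
      proof -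
        have h: "ua = 0" "ub + (uc + ud) = 0" "ue = 0" "thu * uc + thu * ud = 0"
          "bl * (thu * uc) + bu * (thu * ud) = 0"
          using that unfolding A_def C_def D_def E_def F_def
          by (auto simp: algebra_simps zero_prod_def)
        have "thu * (uc + ud) = 0" using h by (simp add: algebra_simps)
        hence s: "ud = - uc" using assms by simp
        have "(thu * (bl - bu)) * uc = 0" using h(5) unfolding s by (simp add: algebra_simps)
        hence "uc = 0" using ne by simp
        thus ?thesis using h s by simp
      qed
    qed
    moreover have "aff_dim {A,C,D,E,F} \<le> aff_dim U" using inU by (intro aff_dim_subset) auto
    ultimately show "4 \<le> aff_dim U" by simp
  qed
  have c: "thu * bl < 0" "thu * bu > 0" "thl * bu < 0" "thl * bl > 0"
    using assms by (simp_all add: mult_pos_neg mult_neg_neg mult_neg_pos)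
  have f1: "facet_ge P (\<lambda>(psi, zp, zm, th, dp). thl * zp + th) thl"
  proof -
    have eq: "(\<lambda>(psi, zp, zm, th, dp). thl * zp + th) = (\<lambda>x. ((0,thl,0,1,0)::pt) \<bullet> x)"
      by (auto simp: fun_eq_iff algebra_simps)
    have d: "aff_dim {A,C,G,H} = 3"
    proof (rule aff_dim_4pts)
      show "distinct [A,C,G,H]" unfolding A_def B_def C_def G_def H_def using assms ne by auto
      show "ua = 0 \<and> ub = 0 \<and> uc = 0 \<and> ud = 0"
        if "ua + ub + uc + ud = 0" "ua *\<^sub>R A + ub *\<^sub>R C + uc *\<^sub>R G + ud *\<^sub>R H = 0"
        for ua ub uc ud
        using that assms ne unfolding A_def B_def C_def G_def H_def
        by (auto simp: algebra_simps zero_prod_def; meson s2a s2b s3a s3b ne)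
    qed
    have "facet_ge (convex hull U) (\<lambda>x. ((0,thl,0,1,0)::pt) \<bullet> x) thl"
    proof (rule facet_aux_ge[where T="{A,C,G,H}" and y=B and z=A])
      show "\<forall>x\<in>U. ((0,thl,0,1,0)::pt) \<bullet> x \<ge> thl" using V by (auto simp: algebra_simps)
      show "B \<in> U" by (rule inU)
      show "((0,thl,0,1,0)::pt) \<bullet> B > thl" unfolding B_def using assms ne m1 c by (simp add: algebra_simps)
      show "{A,C,G,H} \<subseteq> U" using inU by auto
      show "A \<in> {A,C,G,H}" by simp
      show "\<forall>x\<in>{A,C,G,H}. ((0,thl,0,1,0)::pt) \<bullet> x = thl" unfolding A_def B_def C_def G_def H_def by (simp add: algebra_simps)
      show "aff_dim {A,C,G,H} = aff_dim U - 1" using d dimU by simp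
    qed
    then show ?thesis unfolding PU eq .
  qed
  have f2: "facet_le P (\<lambda>(psi, zp, zm, th, dp). thu * zm + th) thu"
  proof -
    have eq: "(\<lambda>(psi, zp, zm, th, dp). thu * zm + th) = (\<lambda>x. ((0,0,thu,1,0)::pt) \<bullet> x)"
      by (auto simp: fun_eq_iff algebra_simps)
    have d: "aff_dim {B,D,E,F} = 3"
    proof (rule aff_dim_4pts)
      show "distinct [B,D,E,F]" unfolding A_def B_def D_def E_def F_def using assms ne by auto
      show "ua = 0 \<and> ub = 0 \<and> uc = 0 \<and> ud = 0"
        if "ua + ub + uc + ud = 0" "ua *\<^sub>R B + ub *\<^sub>R D + uc *\<^sub>R E + ud *\<^sub>R F = 0"
        for ua ub uc ud
        using that assms ne unfolding A_def B_def D_def E_def F_def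
        by (auto simp: algebra_simps zero_prod_def; meson s2a s2b s3a s3b ne)
    qed
    have "facet_le (convex hull U) (\<lambda>x. ((0,0,thu,1,0)::pt) \<bullet> x) thu"
    proof (rule facet_aux[where T="{B,D,E,F}" and y=A and z=B])
      show "\<forall>x\<in>U. ((0,0,thu,1,0)::pt) \<bullet> x \<le> thu" using V by (auto simp: algebra_simps)
      show "A \<in> U" by (rule inU)
      show "((0,0,thu,1,0)::pt) \<bullet> A < thu" unfolding A_def using assms ne m1 c by (simp add: algebra_simps)
      show "{B,D,E,F} \<subseteq> U" using inU by auto
      show "B \<in> {B,D,E,F}" by simp
      show "\<forall>x\<in>{B,D,E,F}. ((0,0,thu,1,0)::pt) \<bullet> x = thu" unfolding A_def B_def D_def E_def F_def by (simp add: algebra_simps)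
      show "aff_dim {B,D,E,F} = aff_dim U - 1" using d dimU by simp
    qed
    then show ?thesis unfolding PU eq .
  qed
  have f3: "facet_ge P (\<lambda>(psi, zp, zm, th, dp). - thu * bl * zp - thl * bu * zm + dp) 0"
  proof -
    have eq: "(\<lambda>(psi, zp, zm, th, dp). - thu * bl * zp - thl * bu * zm + dp) = (\<lambda>x. ((0,-thu*bl,-thl*bu,0,1)::pt) \<bullet> x)"
      by (auto simp: fun_eq_iff algebra_simps)
    have d: "aff_dim {A,B,D,G} = 3"
    proof (rule aff_dim_4pts)
      show "distinct [A,B,D,G]" unfolding A_def B_def C_def D_def G_def using assms ne by auto
      show "ua = 0 \<and> ub = 0 \<and> uc = 0 \<and> ud = 0"
        if "ua + ub + uc + ud = 0" "ua *\<^sub>R A + ub *\<^sub>R B + uc *\<^sub>R D + ud *\<^sub>R G = 0"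
        for ua ub uc ud
        using that assms ne unfolding A_def B_def C_def D_def G_def
        by (auto simp: algebra_simps zero_prod_def; meson s2a s2b s3a s3b ne)
    qed
    have "facet_ge (convex hull U) (\<lambda>x. ((0,-thu*bl,-thl*bu,0,1)::pt) \<bullet> x) 0"
    proof (rule facet_aux_ge[where T="{A,B,D,G}" and y=C and z=A])
      show "\<forall>x\<in>U. ((0,-thu*bl,-thl*bu,0,1)::pt) \<bullet> x \<ge> 0" using V by (auto simp: algebra_simps)
      show "C \<in> U" by (rule inU)
      show "((0,-thu*bl,-thl*bu,0,1)::pt) \<bullet> C > 0" unfolding C_def using assms ne m1 c by (simp add: algebra_simps)
      show "{A,B,D,G} \<subseteq> U" using inU by auto
      show "A \<in> {A,B,D,G}" by simp
      show "\<forall>x\<in>{A,B,D,G}. ((0,-thu*bl,-thl*bu,0,1)::pt) \<bullet> x = 0" unfolding A_def B_def C_def D_def G_def by (simp add: algebra_simps)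
      show "aff_dim {A,B,D,G} = aff_dim U - 1" using d dimU by simp
    qed
    then show ?thesis unfolding PU eq .
  qed
  have f4: "facet_le P (\<lambda>(psi, zp, zm, th, dp). - thu * bu * zp - thl * bl * zm + dp) 0"
  proof -
    have eq: "(\<lambda>(psi, zp, zm, th, dp). - thu * bu * zp - thl * bl * zm + dp) = (\<lambda>x. ((0,-thu*bu,-thl*bl,0,1)::pt) \<bullet> x)"
      by (auto simp: fun_eq_iff algebra_simps)
    have d: "aff_dim {A,B,E,H} = 3"
    proof (rule aff_dim_4pts)
      show "distinct [A,B,E,H]" unfolding A_def B_def C_def E_def H_def using assms ne by auto
      show "ua = 0 \<and> ub = 0 \<and> uc = 0 \<and> ud = 0"
        if "ua + ub + uc + ud = 0" "ua *\<^sub>R A + ub *\<^sub>R B + uc *\<^sub>R E + ud *\<^sub>R H = 0"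
        for ua ub uc ud
        using that assms ne unfolding A_def B_def C_def E_def H_def
        by (auto simp: algebra_simps zero_prod_def; meson s2a s2b s3a s3b ne)
    qed
    have "facet_le (convex hull U) (\<lambda>x. ((0,-thu*bu,-thl*bl,0,1)::pt) \<bullet> x) 0"
    proof (rule facet_aux[where T="{A,B,E,H}" and y=C and z=A])
      show "\<forall>x\<in>U. ((0,-thu*bu,-thl*bl,0,1)::pt) \<bullet> x \<le> 0" using V by (auto simp: algebra_simps)
      show "C \<in> U" by (rule inU)
      show "((0,-thu*bu,-thl*bl,0,1)::pt) \<bullet> C < 0" unfolding C_def using assms ne m1 c by (simp add: algebra_simps)
      show "{A,B,E,H} \<subseteq> U" using inU by auto
      show "A \<in> {A,B,E,H}" by simp
      show "\<forall>x\<in>{A,B,E,H}. ((0,-thu*bu,-thl*bl,0,1)::pt) \<bullet> x = 0" unfolding A_def B_def C_def E_def H_def by (simp add: algebra_simps)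
      show "aff_dim {A,B,E,H} = aff_dim U - 1" using d dimU by simp
    qed
    then show ?thesis unfolding PU eq .
  qed
  have f5: "facet_le P (\<lambda>(psi, zp, zm, th, dp). thu * bl * zp + thu * bu * zm + bu * th - dp) (thu * bu)"
  proof -
    have eq: "(\<lambda>(psi, zp, zm, th, dp). thu * bl * zp + thu * bu * zm + bu * th - dp) = (\<lambda>x. ((0,thu*bl,thu*bu,bu,-1)::pt) \<bullet> x)"
      by (auto simp: fun_eq_iff algebra_simps)
    have d: "aff_dim {B,D,F,G} = 3"
    proof (rule aff_dim_4pts)
      show "distinct [B,D,F,G]" unfolding A_def B_def D_def F_def G_def using assms ne by auto
      show "ua = 0 \<and> ub = 0 \<and> uc = 0 \<and> ud = 0"
        if "ua + ub + uc + ud = 0" "ua *\<^sub>R B + ub *\<^sub>R D + uc *\<^sub>R F + ud *\<^sub>R G = 0"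
        for ua ub uc ud
        using that assms ne unfolding A_def B_def D_def F_def G_def
        by (auto simp: algebra_simps zero_prod_def; meson s2a s2b s3a s3b ne)
    qed
    have "facet_le (convex hull U) (\<lambda>x. ((0,thu*bl,thu*bu,bu,-1)::pt) \<bullet> x) (thu * bu)"
    proof (rule facet_aux[where T="{B,D,F,G}" and y=A and z=B])
      show "\<forall>x\<in>U. ((0,thu*bl,thu*bu,bu,-1)::pt) \<bullet> x \<le> (thu * bu)" using V by (auto simp: algebra_simps)
      show "A \<in> U" by (rule inU)
      show "((0,thu*bl,thu*bu,bu,-1)::pt) \<bullet> A < (thu * bu)" unfolding A_def using assms ne m1 c by (simp add: algebra_simps)
      show "{B,D,F,G} \<subseteq> U" using inU by auto
      show "B \<in> {B,D,F,G}" by simp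
      show "\<forall>x\<in>{B,D,F,G}. ((0,thu*bl,thu*bu,bu,-1)::pt) \<bullet> x = (thu * bu)" unfolding A_def B_def D_def F_def G_def by (simp add: algebra_simps)
      show "aff_dim {B,D,F,G} = aff_dim U - 1" using d dimU by simp
    qed
    then show ?thesis unfolding PU eq .
  qed
  have f6: "facet_ge P (\<lambda>(psi, zp, zm, th, dp). thu * bu * zp + thu * bl * zm + bl * th - dp) (thu * bl)"
  proof -
    have eq: "(\<lambda>(psi, zp, zm, th, dp). thu * bu * zp + thu * bl * zm + bl * th - dp) = (\<lambda>x. ((0,thu*bu,thu*bl,bl,-1)::pt) \<bullet> x)"
      by (auto simp: fun_eq_iff algebra_simps)
    have d: "aff_dim {B,E,F,H} = 3"
    proof (rule aff_dim_4pts)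
      show "distinct [B,E,F,H]" unfolding A_def B_def E_def F_def H_def using assms ne by auto
      show "ua = 0 \<and> ub = 0 \<and> uc = 0 \<and> ud = 0"
        if "ua + ub + uc + ud = 0" "ua *\<^sub>R B + ub *\<^sub>R E + uc *\<^sub>R F + ud *\<^sub>R H = 0"
        for ua ub uc ud
        using that assms ne unfolding A_def B_def E_def F_def H_def
        by (auto simp: algebra_simps zero_prod_def; meson s2a s2b s3a s3b ne)
    qed
    have "facet_ge (convex hull U) (\<lambda>x. ((0,thu*bu,thu*bl,bl,-1)::pt) \<bullet> x) (thu * bl)"
    proof (rule facet_aux_ge[where T="{B,E,F,H}" and y=A and z=B])
      show "\<forall>x\<in>U. ((0,thu*bu,thu*bl,bl,-1)::pt) \<bullet> x \<ge> (thu * bl)" using V by (auto simp: algebra_simps)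
      show "A \<in> U" by (rule inU)
      show "((0,thu*bu,thu*bl,bl,-1)::pt) \<bullet> A > (thu * bl)" unfolding A_def using assms ne m1 c by (simp add: algebra_simps)
      show "{B,E,F,H} \<subseteq> U" using inU by auto
      show "B \<in> {B,E,F,H}" by simp
      show "\<forall>x\<in>{B,E,F,H}. ((0,thu*bu,thu*bl,bl,-1)::pt) \<bullet> x = (thu * bl)" unfolding A_def B_def E_def F_def H_def by (simp add: algebra_simps)
      show "aff_dim {B,E,F,H} = aff_dim U - 1" using d dimU by simp
    qed
    then show ?thesis unfolding PU eq .
  qed
  have f7: "facet_ge P (\<lambda>(psi, zp, zm, th, dp). thl * bu * zp + thl * bl * zm + bu * th - dp) (thl * bu)"
  proof -
    have eq: "(\<lambda>(psi, zp, zm, th, dp). thl * bu * zp + thl * bl * zm + bu * th - dp) = (\<lambda>x. ((0,thl*bu,thl*bl,bu,-1)::pt) \<bullet> x)"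
      by (auto simp: fun_eq_iff algebra_simps)
    have d: "aff_dim {A,C,E,H} = 3"
    proof (rule aff_dim_4pts)
      show "distinct [A,C,E,H]" unfolding A_def B_def C_def E_def H_def using assms ne by auto
      show "ua = 0 \<and> ub = 0 \<and> uc = 0 \<and> ud = 0"
        if "ua + ub + uc + ud = 0" "ua *\<^sub>R A + ub *\<^sub>R C + uc *\<^sub>R E + ud *\<^sub>R H = 0"
        for ua ub uc ud
        using that assms ne unfolding A_def B_def C_def E_def H_def
        by (auto simp: algebra_simps zero_prod_def; meson s2a s2b s3a s3b ne)
    qed
    have "facet_ge (convex hull U) (\<lambda>x. ((0,thl*bu,thl*bl,bu,-1)::pt) \<bullet> x) (thl * bu)"
    proof (rule facet_aux_ge[where T="{A,C,E,H}" and y=B and z=A])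
      show "\<forall>x\<in>U. ((0,thl*bu,thl*bl,bu,-1)::pt) \<bullet> x \<ge> (thl * bu)" using V by (auto simp: algebra_simps)
      show "B \<in> U" by (rule inU)
      show "((0,thl*bu,thl*bl,bu,-1)::pt) \<bullet> B > (thl * bu)" unfolding B_def using assms ne m1 c by (simp add: algebra_simps)
      show "{A,C,E,H} \<subseteq> U" using inU by auto
      show "A \<in> {A,C,E,H}" by simp
      show "\<forall>x\<in>{A,C,E,H}. ((0,thl*bu,thl*bl,bu,-1)::pt) \<bullet> x = (thl * bu)" unfolding A_def B_def C_def E_def H_def by (simp add: algebra_simps)
      show "aff_dim {A,C,E,H} = aff_dim U - 1" using d dimU by simp
    qed
    then show ?thesis unfolding PU eq .
  qed
  have f8: "facet_le P (\<lambda>(psi, zp, zm, th, dp). thl * bl * zp + thl * bu * zm + bl * th - dp) (thl * bl)"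
  proof -
    have eq: "(\<lambda>(psi, zp, zm, th, dp). thl * bl * zp + thl * bu * zm + bl * th - dp) = (\<lambda>x. ((0,thl*bl,thl*bu,bl,-1)::pt) \<bullet> x)"
      by (auto simp: fun_eq_iff algebra_simps)
    have d: "aff_dim {A,C,D,G} = 3"
    proof (rule aff_dim_4pts)
      show "distinct [A,C,D,G]" unfolding A_def B_def C_def D_def G_def using assms ne by auto
      show "ua = 0 \<and> ub = 0 \<and> uc = 0 \<and> ud = 0"
        if "ua + ub + uc + ud = 0" "ua *\<^sub>R A + ub *\<^sub>R C + uc *\<^sub>R D + ud *\<^sub>R G = 0"
        for ua ub uc ud
        using that assms ne unfolding A_def B_def C_def D_def G_def
        by (auto simp: algebra_simps zero_prod_def; meson s2a s2b s3a s3b ne)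
    qed
    have "facet_le (convex hull U) (\<lambda>x. ((0,thl*bl,thl*bu,bl,-1)::pt) \<bullet> x) (thl * bl)"
    proof (rule facet_aux[where T="{A,C,D,G}" and y=B and z=A])
      show "\<forall>x\<in>U. ((0,thl*bl,thl*bu,bl,-1)::pt) \<bullet> x \<le> (thl * bl)" using V by (auto simp: algebra_simps)
      show "B \<in> U" by (rule inU)
      show "((0,thl*bl,thl*bu,bl,-1)::pt) \<bullet> B < (thl * bl)" unfolding B_def using assms ne m1 c by (simp add: algebra_simps)
      show "{A,C,D,G} \<subseteq> U" using inU by auto
      show "A \<in> {A,C,D,G}" by simp
      show "\<forall>x\<in>{A,C,D,G}. ((0,thl*bl,thl*bu,bl,-1)::pt) \<bullet> x = (thl * bl)" unfolding A_def B_def C_def D_def G_def by (simp add: algebra_simps)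
      show "aff_dim {A,C,D,G} = aff_dim U - 1" using d dimU by simp
    qed
    then show ?thesis unfolding PU eq .
  qed
  show ?thesis using f1 f2 f3 f4 f5 f6 f7 f8 by blast
qed

end
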